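(* Let $n\ge2$, let $Q$ be a symmetric $n\times n$ matrix with entries in $[0,1]$ and zero diagonal, and let $A=\mathrm{Bern}(Q)$. Then $\mathbb E[\|A-Q\|_\square]\le16\sqrt{\rho(Q)/n}$, and if $n\rho(Q)\ge1$, then with probability at least $1-e^{-n}$, $\|A-Q\|_\square\le15\sqrt{\rho(Q)/n}$.
   Context: $\mathrm{Bern}(Q)$ is the random symmetric $\{0,1\}$-matrix with $A_{ij}=A_{ji}=1$ with probability $Q_{ij}$ independently for $i<j$ and $A_{ii}=0$. For an $n\times n$ matrix $H$: $\rho(H)=\frac1{n^2}\sum_{i,j}H_{ij}$ and $\|H\|_\square=\max_{S,T\subseteq[n]}\frac1{n^2}|\sum_{(i,j)\in S\times T}H_{ij}|$. *)

theory Defs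
  imports "HOL-Probability.Probability"
begin

text \<open>n x n matrices are functions nat => nat => real, indexed by {0..<n}.\<close>

definition density :: "nat \<Rightarrow> (nat \<Rightarrow> nat \<Rightarrow> real) \<Rightarrow> real" where
  "density n H = (\<Sum>i<n. \<Sum>j<n. H i j) / (real n)^2"

definition cut_norm :: "nat \<Rightarrow> (nat \<Rightarrow> nat \<Rightarrow> real) \<Rightarrow> real" where
  "cut_norm n H = Max {\<bar>\<Sum>i\<in>S. \<Sum>j\<in>T. H i j\<bar> / (real n)^2 | S T. S \<subseteq> {..<n} \<and> T \<subseteq> {..<n}}"

text \<open>Bern(Q): independent Bernoulli(Q i j) entries for i < j < n, symmetrised, zero diagonal.
  Entries outside the index range {0..<n} are 0.\<close>

definition bern :: "nat \<Rightarrow> (nat \<Rightarrow> nat \<Rightarrow> real) \<Rightarrow> (nat \<Rightarrow> nat \<Rightarrow> real) pmf" where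
  "bern n Q = map_pmf
     (\<lambda>X i j. if i < j then (if X (i, j) then 1 else 0)
              else if j < i then (if X (j, i) then 1 else 0) else 0)
     (Pi_pmf {(i, j). i < j \<and> j < n} False (\<lambda>(i, j). bernoulli_pmf (Q i j)))"

end

theory Submission imports Defs begin

lemma exp_quad:
  fixes u :: real assumes "\<bar>u\<bar> \<le> 1" shows "exp u \<le> 1 + u + u^2"
proof (cases "u \<ge> 0")
  case True thus ?thesis using assms exp_bound by auto
next
  case False
  define y where "y = - u"
  have y: "y \<ge> 0" using False y_def by auto
  have e: "1 + y + y^2/2 \<le> exp y" using exp_lower_Taylor_quadratic y by auto
  have "1 \<le> (1 + y + y^2/2) * (1 - y + y^2)"
  proof -
    have "(1 + y + y^2/2) * (1 - y + y^2) = 1 + y^2/2 + y^3/2 + y^4/2"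
      by (simp add: field_simps power2_eq_square power3_eq_cube power4_eq_xxxx)
    thus ?thesis using y by simp
  qed
  also have "\<dots> \<le> exp y * (1 - y + y^2)"
  proof (rule mult_right_mono[OF e])
    have "0 \<le> (y - 1/2)^2" by simp
    thus "0 \<le> 1 - y + y^2" by (simp add: power2_eq_square algebra_simps)
  qed
  finally have "1 \<le> exp y * (1 - y + y^2)" .
  hence "exp (-y) \<le> 1 - y + y^2"
    by (simp add: exp_minus field_simps)
  thus ?thesis by (simp add: y_def)
qed

lemma mgf_bern:
  fixes q u :: real
  assumes q: "0 \<le> q" "q \<le> 1" and u: "\<bar>u\<bar> \<le> 1"
  shows "measure_pmf.expectation (bernoulli_pmf q) (\<lambda>x. exp (u * ((if x then 1 else 0) - q)))
          \<le> exp (q * u^2)"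
proof -
  have "measure_pmf.expectation (bernoulli_pmf q) (\<lambda>x. exp (u * ((if x then 1 else 0) - q)))
       = exp (u * (1 - q)) * q + exp (u * (0 - q)) * (1 - q)" using q by simp
  also have "\<dots> = exp (- u * q) * (1 + q * (exp u - 1))"
    by (simp add: algebra_simps flip: exp_add)
  also have "\<dots> \<le> exp (- u * q) * (1 + q * (u + u^2))"
    using exp_quad[OF u] q by (intro mult_left_mono) (auto intro: mult_left_mono)
  also have "\<dots> \<le> exp (- u * q) * exp (q * (u + u^2))"
    by (intro mult_left_mono) (auto simp: exp_ge_add_one_self)
  also have "\<dots> = exp (q * u^2)" by (simp add: algebra_simps flip: exp_add)
  finally show ?thesis .
qed


lemma finite_set_Pi_bern:
  assumes "finite E"
  shows "finite (set_pmf (Pi_pmf E False (\<lambda>e. bernoulli_pmf (q e))))"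
  by (rule finite_subset[OF set_Pi_pmf_subset'[OF assms]]) (auto intro!: finite_PiE_dflt assms)

lemma chernoff:
  fixes E :: "'a set" and q c :: "'a \<Rightarrow> real" and l t :: real
  assumes E: "finite E" and q: "\<And>e. e \<in> E \<Longrightarrow> 0 \<le> q e \<and> q e \<le> 1"
    and c: "\<And>e. e \<in> E \<Longrightarrow> \<bar>c e\<bar> \<le> 2" and l: "0 \<le> l" "2 * l \<le> 1"
  shows "measure_pmf.prob (Pi_pmf E False (\<lambda>e. bernoulli_pmf (q e)))
           {X. t \<le> (\<Sum>e\<in>E. c e * ((if X e then 1 else 0) - q e))}
         \<le> exp (- l * t + 4 * l^2 * (\<Sum>e\<in>E. q e))"
proof -
  define P where "P = Pi_pmf E False (\<lambda>e. bernoulli_pmf (q e))"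
  define Z where "Z = (\<lambda>X. \<Sum>e\<in>E. c e * ((if X e then 1 else 0) - q e))"
  have fin: "finite (set_pmf P)" unfolding P_def by (rule finite_set_Pi_bern[OF E])
  have "measure_pmf.prob P {X. t \<le> Z X} = measure_pmf.expectation P (indicator {X. t \<le> Z X})"
    by simp
  also have "\<dots> \<le> measure_pmf.expectation P (\<lambda>X. exp (l * (Z X - t)))"
  proof (rule integral_mono)
    show "integrable (measure_pmf P) (indicator {X. t \<le> Z X} :: _ \<Rightarrow> real)"
      by (rule integrable_measure_pmf_finite[OF fin])
    show "integrable (measure_pmf P) (\<lambda>X. exp (l * (Z X - t)))"
      by (rule integrable_measure_pmf_finite[OF fin])
    fix X
    show "indicator {X. t \<le> Z X} X \<le> exp (l * (Z X - t))"
    proof (cases "t \<le> Z X")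
      case True
      hence "0 \<le> l * (Z X - t)" using l by simp
      thus ?thesis using True by (simp add: indicator_def)
    qed (simp add: indicator_def)
  qed
  also have "(\<lambda>X. exp (l * (Z X - t))) = (\<lambda>X. exp (- l * t) * (\<Prod>e\<in>E. exp (l * c e * ((if X e then 1 else 0) - q e))))"
  proof (rule ext)
    fix X
    have lz: "l * (Z X - t) = - l * t + (\<Sum>e\<in>E. l * c e * ((if X e then 1 else 0) - q e))"
      by (simp add: Z_def sum_distrib_left algebra_simps)
    thus "exp (l * (Z X - t)) = exp (- l * t) * (\<Prod>e\<in>E. exp (l * c e * ((if X e then 1 else 0) - q e)))"
      by (subst lz) (simp only: exp_add exp_sum[OF E])
  qed
  also have "measure_pmf.expectation P \<dots> = exp (- l * t) * measure_pmf.expectation P (\<lambda>X. \<Prod>e\<in>E. exp (l * c e * ((if X e then 1 else 0) - q e)))"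
    by simp
  also have "measure_pmf.expectation P (\<lambda>X. \<Prod>e\<in>E. exp (l * c e * ((if X e then 1 else 0) - q e)))
      = (\<Prod>e\<in>E. measure_pmf.expectation (bernoulli_pmf (q e)) (\<lambda>x. exp (l * c e * ((if x then 1 else 0) - q e))))"
    unfolding P_def
    by (rule expectation_prod_Pi_pmf[OF E, where f = "\<lambda>e x. exp (l * c e * ((if x then 1 else 0) - q e))"])
       (auto intro: integrable_measure_pmf_finite)
  also have "\<dots> \<le> (\<Prod>e\<in>E. exp (q e * (l * c e)^2))"
  proof (rule prod_mono, safe)
    fix e assume e: "e \<in> E"
    show "0 \<le> measure_pmf.expectation (bernoulli_pmf (q e)) (\<lambda>x. exp (l * c e * ((if x then 1 else 0) - q e)))"
      by (rule integral_nonneg_AE) auto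
    have "\<bar>l * c e\<bar> = l * \<bar>c e\<bar>" using l by (simp add: abs_mult)
    also have "\<dots> \<le> l * 2" using c[OF e] l by (intro mult_left_mono) auto
    also have "\<dots> \<le> 1" using l by simp
    finally have "\<bar>l * c e\<bar> \<le> 1" .
    thus "measure_pmf.expectation (bernoulli_pmf (q e)) (\<lambda>x. exp (l * c e * ((if x then 1 else 0) - q e)))
        \<le> exp (q e * (l * c e)^2)"
      using mgf_bern[of "q e" "l * c e"] q[OF e] by auto
  qed
  also have "\<dots> \<le> (\<Prod>e\<in>E. exp (4 * l^2 * q e))"
  proof (rule prod_mono)
    fix e assume e: "e \<in> E"
    have "(c e)^2 \<le> 2^2" using c[OF e] by (metis abs_le_square_iff abs_numeral)
    hence "q e * (l * c e)^2 \<le> q e * (l^2 * 4)" using q[OF e]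
      by (intro mult_left_mono) (auto simp: power_mult_distrib intro: mult_left_mono)
    hence "exp (q e * (l * c e)^2) \<le> exp (4 * l^2 * q e)" by (simp add: algebra_simps)
    thus "0 \<le> exp (q e * (l * c e)^2) \<and> exp (q e * (l * c e)^2) \<le> exp (4 * l^2 * q e)" by simp
  qed
  also have "\<dots> = exp (4 * l^2 * (\<Sum>e\<in>E. q e))" by (simp add: exp_sum[OF E] sum_distrib_left)
  finally have "measure_pmf.prob P {X. t \<le> Z X} \<le> exp (- l * t) * exp (4 * l^2 * (\<Sum>e\<in>E. q e))"
    by (simp add: mult_left_mono)
  thus ?thesis by (simp add: P_def Z_def flip: exp_add)
qed


definition Ep :: "nat \<Rightarrow> (nat \<times> nat) set" where "Ep n = {(i, j). i < j \<and> j < n}"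

definition Aof :: "(nat \<times> nat \<Rightarrow> bool) \<Rightarrow> nat \<Rightarrow> nat \<Rightarrow> real" where
  "Aof X = (\<lambda>i j. if i < j then (if X (i, j) then 1 else 0)
              else if j < i then (if X (j, i) then 1 else 0) else 0)"

lemma finite_Ep: "finite (Ep n)"
  by (rule finite_subset[of _ "{..<n} \<times> {..<n}"]) (auto simp: Ep_def)

lemma bern_eq: "bern n Q = map_pmf Aof (Pi_pmf (Ep n) False (\<lambda>e. bernoulli_pmf (case_prod Q e)))"
  unfolding bern_def Aof_def Ep_def by (simp add: case_prod_unfold)

lemma sum_split:
  fixes g :: "nat \<Rightarrow> nat \<Rightarrow> real"
  shows "(\<Sum>i<n. \<Sum>j<n. g i j) = (\<Sum>e\<in>Ep n. g (fst e) (snd e) + g (snd e) (fst e)) + (\<Sum>i<n. g i i)"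
proof -
  define h where "h = (\<lambda>p. g (fst p) (snd p))"
  have U: "{..<n} \<times> {..<n} = (Ep n \<union> prod.swap ` Ep n) \<union> (\<lambda>i. (i, i)) ` {..<n}"
    by (auto simp: Ep_def image_iff)
  have f1: "finite (prod.swap ` Ep n)" using finite_Ep by simp
  have "(\<Sum>i<n. \<Sum>j<n. g i j) = sum h ({..<n} \<times> {..<n})"
    by (simp add: h_def sum.cartesian_product case_prod_unfold)
  also have "\<dots> = sum h (Ep n \<union> prod.swap ` Ep n) + sum h ((\<lambda>i. (i, i)) ` {..<n})"
    unfolding U using finite_Ep[of n] f1 by (intro sum.union_disjoint) (auto simp: Ep_def)
  also have "sum h (Ep n \<union> prod.swap ` Ep n) = sum h (Ep n) + sum h (prod.swap ` Ep n)"
    using finite_Ep[of n] f1 by (intro sum.union_disjoint) (auto simp: Ep_def)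
  also have "sum h (prod.swap ` Ep n) = sum (h \<circ> prod.swap) (Ep n)"
    by (rule sum.reindex) (auto intro: inj_on_subset[OF swap_inj_on])
  also have "sum h ((\<lambda>i. (i, i)) ` {..<n}) = (\<Sum>i<n. g i i)"
    by (subst sum.reindex) (auto simp: inj_on_def h_def)
  finally show ?thesis by (simp add: h_def sum.distrib)
qed

lemma cut_set_eq: "{\<bar>\<Sum>i\<in>S. \<Sum>j\<in>T. H i j\<bar> / (real n)^2 | S T. S \<subseteq> {..<n} \<and> T \<subseteq> {..<n}}
   = (\<lambda>(S, T). \<bar>\<Sum>i\<in>S. \<Sum>j\<in>T. H i j\<bar> / (real n)^2) ` (Pow {..<n} \<times> Pow {..<n})"
  by auto

lemma cut_le_iff:
  "cut_norm n H \<le> r \<longleftrightarrow> (\<forall>S T. S \<subseteq> {..<n} \<longrightarrow> T \<subseteq> {..<n} \<longrightarrow> \<bar>\<Sum>i\<in>S. \<Sum>j\<in>T. H i j\<bar> / (real n)^2 \<le> r)"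
  unfolding cut_norm_def cut_set_eq
  by (subst Max_le_iff) auto

lemma cut_le_L1: "cut_norm n H \<le> (\<Sum>i<n. \<Sum>j<n. \<bar>H i j\<bar>) / (real n)^2"
  unfolding cut_le_iff
proof (intro allI impI)
  fix S T assume S: "S \<subseteq> {..<n}" and T: "T \<subseteq> {..<n}"
  have "\<bar>\<Sum>i\<in>S. \<Sum>j\<in>T. H i j\<bar> \<le> (\<Sum>i\<in>S. \<Sum>j\<in>T. \<bar>H i j\<bar>)"
    by (rule order_trans[OF sum_abs]) (intro sum_mono sum_abs)
  also have "\<dots> \<le> (\<Sum>i\<in>S. \<Sum>j<n. \<bar>H i j\<bar>)"
    by (intro sum_mono sum_mono2) (use T in auto)
  also have "\<dots> \<le> (\<Sum>i<n. \<Sum>j<n. \<bar>H i j\<bar>)"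
    by (intro sum_mono2) (use S in \<open>auto intro: sum_nonneg\<close>)
  finally show "\<bar>\<Sum>i\<in>S. \<Sum>j\<in>T. H i j\<bar> / (real n)^2 \<le> (\<Sum>i<n. \<Sum>j<n. \<bar>H i j\<bar>) / (real n)^2"
    by (simp add: divide_right_mono)
qed

lemma marg:
  assumes "finite E" "e \<in> E"
  shows "measure_pmf.expectation (Pi_pmf E d p) (\<lambda>X. f (X e)) = measure_pmf.expectation (p e) (f :: _ \<Rightarrow> real)"
proof -
  have "map_pmf (\<lambda>X. X e) (Pi_pmf E d p) = p e" using Pi_pmf_component[OF assms(1), of e d p] assms(2) by simp
  hence "measure_pmf.expectation (map_pmf (\<lambda>X. X e) (Pi_pmf E d p)) f = measure_pmf.expectation (p e) f" by simp
  thus ?thesis by simp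
qed


definition cST :: "nat set \<Rightarrow> nat set \<Rightarrow> nat \<times> nat \<Rightarrow> real" where
  "cST S T e = (if fst e \<in> S \<and> snd e \<in> T then 1 else 0) + (if snd e \<in> S \<and> fst e \<in> T then 1 else 0)"

lemma cST_bound: "\<bar>s * cST S T e\<bar> \<le> 2" if "\<bar>s\<bar> = 1" for s :: real
  using that by (auto simp: cST_def abs_mult)

lemma sum_restrict2:
  fixes f :: "nat \<Rightarrow> nat \<Rightarrow> real"
  assumes "S \<subseteq> {..<n}" "T \<subseteq> {..<n}"
  shows "(\<Sum>i\<in>S. \<Sum>j\<in>T. f i j) = (\<Sum>i<n. \<Sum>j<n. if i \<in> S \<and> j \<in> T then f i j else 0)"
proof -
  have S: "S = {..<n} \<inter> S" and T: "T = {..<n} \<inter> T" using assms by auto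
  have "(\<Sum>i\<in>S. \<Sum>j\<in>T. f i j) = (\<Sum>i<n. if i \<in> S then (\<Sum>j<n. if j \<in> T then f i j else 0) else 0)"
    by (subst S, subst T, subst sum.inter_restrict, simp, subst sum.inter_restrict) auto
  also have "\<dots> = (\<Sum>i<n. \<Sum>j<n. if i \<in> S \<and> j \<in> T then f i j else 0)"
    by (intro sum.cong) auto
  finally show ?thesis .
qed

lemma Z_eq:
  fixes Q :: "nat \<Rightarrow> nat \<Rightarrow> real"
  assumes S: "S \<subseteq> {..<n}" and T: "T \<subseteq> {..<n}"
    and sym: "\<And>i j. i < n \<Longrightarrow> j < n \<Longrightarrow> Q i j = Q j i"
    and diag: "\<And>i. i < n \<Longrightarrow> Q i i = 0"
  shows "(\<Sum>i\<in>S. \<Sum>j\<in>T. Aof X i j - Q i j) = (\<Sum>e\<in>Ep n. cST S T e * ((if X e then 1 else 0) - case_prod Q e))"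
proof -
  define g where "g = (\<lambda>i j. if i \<in> S \<and> j \<in> T then Aof X i j - Q i j else 0)"
  have "(\<Sum>i\<in>S. \<Sum>j\<in>T. Aof X i j - Q i j) = (\<Sum>i<n. \<Sum>j<n. g i j)"
    unfolding g_def by (rule sum_restrict2[OF S T])
  also have "\<dots> = (\<Sum>e\<in>Ep n. g (fst e) (snd e) + g (snd e) (fst e)) + (\<Sum>i<n. g i i)"
    by (rule sum_split)
  also have "(\<Sum>i<n. g i i) = 0"
    by (intro sum.neutral) (auto simp: g_def Aof_def diag)
  also have "(\<Sum>e\<in>Ep n. g (fst e) (snd e) + g (snd e) (fst e))
      = (\<Sum>e\<in>Ep n. cST S T e * ((if X e then 1 else 0) - case_prod Q e))"
  proof (intro sum.cong refl)
    fix e assume e: "e \<in> Ep n"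
    then obtain i j where ij: "e = (i, j)" "i < j" "j < n" by (auto simp: Ep_def)
    have "Q j i = Q i j" using sym[of i j] ij by simp
    thus "g (fst e) (snd e) + g (snd e) (fst e) = cST S T e * ((if X e then 1 else 0) - case_prod Q e)"
      using ij by (auto simp: g_def Aof_def cST_def algebra_simps)
  qed
  finally show ?thesis by simp
qed

lemma sumQ:
  fixes Q :: "nat \<Rightarrow> nat \<Rightarrow> real"
  assumes sym: "\<And>i j. i < n \<Longrightarrow> j < n \<Longrightarrow> Q i j = Q j i"
    and diag: "\<And>i. i < n \<Longrightarrow> Q i i = 0"
  shows "(\<Sum>i<n. \<Sum>j<n. Q i j) = 2 * (\<Sum>e\<in>Ep n. case_prod Q e)"
proof -
  have "(\<Sum>i<n. \<Sum>j<n. Q i j) = (\<Sum>e\<in>Ep n. Q (fst e) (snd e) + Q (snd e) (fst e)) + (\<Sum>i<n. Q i i)"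
    by (rule sum_split)
  also have "(\<Sum>i<n. Q i i) = 0" by (simp add: diag)
  also have "(\<Sum>e\<in>Ep n. Q (fst e) (snd e) + Q (snd e) (fst e)) = (\<Sum>e\<in>Ep n. 2 * case_prod Q e)"
    by (intro sum.cong refl) (auto simp: Ep_def sym)
  finally show ?thesis by (simp add: sum_distrib_left)
qed


lemma count_bound:
  assumes "n \<ge> 1"
  shows "real (2^n * 2^n * 2) * exp (- 7 * real n) \<le> exp (- real n)"
proof -
  have "(2::real) \<le> 2^n" using assms by (metis one_le_numeral power_increasing power_one_right)
  hence "real (2^n * 2^n * 2) \<le> 2^n * 2^n * 2^n" by simp
  also have "\<dots> = (8::real)^n" by (simp flip: power_mult_distrib)
  also have "\<dots> \<le> exp 6 ^ n"
  proof (rule power_mono)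
    have "1 + 6 + (6::real)^2/2 \<le> exp 6" by (rule exp_lower_Taylor_quadratic) simp
    thus "(8::real) \<le> exp 6" by simp
  qed simp
  also have "\<dots> = exp (6 * real n)" by (simp add: exp_of_nat_mult[symmetric] mult.commute)
  finally have "real (2^n * 2^n * 2) * exp (- 7 * real n) \<le> exp (6 * real n) * exp (- 7 * real n)"
    by (simp add: mult_right_mono)
  also have "\<dots> = exp (- real n)" by (simp flip: exp_add)
  finally show ?thesis .
qed

theorem lemmaB3:
  fixes n :: nat and Q :: "nat \<Rightarrow> nat \<Rightarrow> real"
  assumes "n \<ge> 2"
    and "\<And>i j. i < n \<Longrightarrow> j < n \<Longrightarrow> Q i j = Q j i"
    and "\<And>i j. i < n \<Longrightarrow> j < n \<Longrightarrow> 0 \<le> Q i j \<and> Q i j \<le> 1"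
    and "\<And>i. i < n \<Longrightarrow> Q i i = 0"
  shows "measure_pmf.expectation (bern n Q) (\<lambda>A. cut_norm n (\<lambda>i j. A i j - Q i j))
           \<le> 16 * sqrt (density n Q / real n) \<and>
         (real n * density n Q \<ge> 1 \<longrightarrow>
         measure_pmf.prob (bern n Q)
           {A. cut_norm n (\<lambda>i j. A i j - Q i j) \<le> 15 * sqrt (density n Q / real n)}
         \<ge> 1 - exp (- real n))"
proof -
  note sym = assms(2) and Qb = assms(3) and diag = assms(4)
  define E where "E = Ep n"
  define P where "P = Pi_pmf E False (\<lambda>e. bernoulli_pmf (case_prod Q e))"
  define H where "H = (\<lambda>X i j. Aof X i j - Q i j)"
  define D where "D = (\<Sum>i<n. \<Sum>j<n. Q i j)"
  define \<rho> where "\<rho> = density n Q"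
  have n2: "real n \<ge> 2" using assms(1) by simp
  have \<rho>D: "\<rho> = D / (real n)^2" by (simp add: \<rho>_def density_def D_def)
  have D0: "D \<ge> 0" unfolding D_def by (intro sum_nonneg) (use Qb in auto)
  have \<rho>0: "\<rho> \<ge> 0" using D0 by (simp add: \<rho>D)
  have mE: "(\<Sum>e\<in>E. case_prod Q e) = D / 2" unfolding E_def D_def using sumQ[of n Q] sym diag by simp
  have fin: "finite (set_pmf P)" unfolding P_def E_def by (rule finite_set_Pi_bern[OF finite_Ep])
  have bern: "bern n Q = map_pmf Aof P" unfolding P_def E_def by (rule bern_eq)
  have qE: "\<And>e. e \<in> E \<Longrightarrow> 0 \<le> case_prod Q e \<and> case_prod Q e \<le> 1"
    using Qb by (auto simp: E_def Ep_def)
  have Hb: "\<bar>H X i j\<bar> \<le> 1" if "i < n" "j < n" for X i j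
    using Qb[OF that] by (auto simp: H_def Aof_def)
  have cut1: "cut_norm n (H X) \<le> 1" for X
  proof -
    have "cut_norm n (H X) \<le> (\<Sum>i<n. \<Sum>j<n. \<bar>H X i j\<bar>) / (real n)^2" by (rule cut_le_L1)
    also have "\<dots> \<le> (\<Sum>i<n. \<Sum>j<n. (1::real)) / (real n)^2"
      by (intro divide_right_mono sum_mono Hb) auto
    also have "\<dots> = 1" using n2 by (simp add: power2_eq_square)
    finally show ?thesis .
  qed
  define s where "s = sqrt (real n * \<rho>)"
  have s0: "s \<ge> 0" using \<rho>0 by (simp add: s_def)
  have s2: "s^2 = real n * \<rho>" using \<rho>0 by (simp add: s_def)
  have sq: "sqrt (\<rho> / real n) = s / real n"
  proof -
    have "\<rho> / real n = (real n * \<rho>) / (real n)^2" using n2 by (simp add: power2_eq_square)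
    thus ?thesis using n2 by (simp add: s_def real_sqrt_divide)
  qed
  have Dn: "D = real n * s^2"
  proof -
    have "real n * s^2 = real n * (real n * D / (real n)^2)" by (simp add: s2 \<rho>D)
    also have "\<dots> = D" using n2 by (simp add: power2_eq_square)
    finally show ?thesis by simp
  qed
  have Hcut: "\<And>X. H X = (\<lambda>i j. Aof X i j - Q i j)" by (simp add: H_def)

  have tail: "measure_pmf.prob P {X. \<not> cut_norm n (H X) \<le> 15 * s / real n} \<le> exp (- real n)"
    if s1: "s \<ge> 1"
  proof -
    define r where "r = 15 * s / real n"
    define t where "t = 15 * real n * s"
    have tr: "t = (real n)^2 * r" using n2 by (simp add: r_def t_def power2_eq_square)
    define l where "l = 1 / (2 * s)"
    define I where "I = Pow {..<n} \<times> Pow {..<n} \<times> {1::real, -1}"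
    define Ev where "Ev = (\<lambda>(S, T, \<sigma>). {X. t \<le> (\<Sum>e\<in>E. (\<sigma> * cST S T e) * ((if X e then 1 else 0) - case_prod Q e))})"
    have sig: "(\<Sum>e\<in>E. (\<sigma> * cST S T e) * y e) = \<sigma> * (\<Sum>e\<in>E. cST S T e * y e)" for \<sigma> S T and y :: "nat \<times> nat \<Rightarrow> real"
      by (simp add: sum_distrib_left mult.assoc)
    have sub: "{X. \<not> cut_norm n (H X) \<le> r} \<subseteq> (\<Union>i\<in>I. Ev i)"
    proof
      fix X assume "X \<in> {X. \<not> cut_norm n (H X) \<le> r}"
      then obtain S T where S: "S \<subseteq> {..<n}" and T: "T \<subseteq> {..<n}"
        and gt: "\<not> \<bar>\<Sum>i\<in>S. \<Sum>j\<in>T. H X i j\<bar> / (real n)^2 \<le> r"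
        unfolding cut_le_iff by blast
      define Z where "Z = (\<Sum>e\<in>E. cST S T e * ((if X e then 1 else 0) - case_prod Q e))"
      have "(\<Sum>i\<in>S. \<Sum>j\<in>T. H X i j) = Z"
        unfolding Z_def E_def H_def by (rule Z_eq[OF S T sym diag])
      with gt have "t < \<bar>Z\<bar>" using n2 by (simp add: tr field_simps)
      show "X \<in> (\<Union>i\<in>I. Ev i)"
      proof (cases "Z \<ge> 0")
        case True
        hence "X \<in> Ev (S, T, 1)" using \<open>t < \<bar>Z\<bar>\<close> by (simp add: Ev_def Z_def)
        moreover have "(S, T, 1) \<in> I" using S T by (simp add: I_def)
        ultimately show ?thesis by blast
      next
        case False
        hence "X \<in> Ev (S, T, -1)" using \<open>t < \<bar>Z\<bar>\<close> by (simp add: Ev_def Z_def sum_negf)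
        moreover have "(S, T, -1) \<in> I" using S T by (simp add: I_def)
        ultimately show ?thesis by blast
      qed
    qed
    have each: "measure_pmf.prob P (Ev i) \<le> exp (- 7 * real n)" if "i \<in> I" for i
    proof -
      obtain S T \<sigma> where i: "i = (S, T, \<sigma>)" by (cases i) auto
      have \<sigma>: "\<bar>\<sigma>\<bar> = 1" using that i by (auto simp: I_def)
      have "measure_pmf.prob P (Ev i) \<le> exp (- l * t + 4 * l^2 * (\<Sum>e\<in>E. case_prod Q e))"
        unfolding i Ev_def P_def prod.case
        by (rule chernoff) (use finite_Ep qE cST_bound[OF \<sigma>] s1 in \<open>auto simp: E_def l_def\<close>)
      also have "- l * t + 4 * l^2 * (\<Sum>e\<in>E. case_prod Q e) = - 7 * real n"
        using s1 by (simp add: mE Dn l_def t_def field_simps power2_eq_square)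
      finally show ?thesis .
    qed
    have "measure_pmf.prob P {X. \<not> cut_norm n (H X) \<le> r} \<le> measure_pmf.prob P (\<Union>i\<in>I. Ev i)"
      by (rule measure_pmf.finite_measure_mono[OF sub]) simp
    also have "\<dots> \<le> (\<Sum>i\<in>I. measure_pmf.prob P (Ev i))"
      by (rule measure_pmf.finite_measure_subadditive_finite) (auto simp: I_def)
    also have "\<dots> \<le> (\<Sum>i\<in>I. exp (- 7 * real n))" by (rule sum_mono) (rule each)
    also have "\<dots> = real (2^n * 2^n * 2) * exp (- 7 * real n)"
      by (simp add: I_def card_cartesian_product card_Pow)
    also have "\<dots> \<le> exp (- real n)" using assms(1) by (intro count_bound) simp
    finally show ?thesis by (simp add: r_def)
  qed

  have exp_eq: "measure_pmf.expectation (bern n Q) (\<lambda>A. cut_norm n (\<lambda>i j. A i j - Q i j))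
      = measure_pmf.expectation P (\<lambda>X. cut_norm n (H X))"
    by (simp add: bern H_def)

  have part1: "measure_pmf.expectation P (\<lambda>X. cut_norm n (H X)) \<le> 16 * (s / real n)"
  proof (cases "s \<ge> 8")
    case True
    define B where "B = {X. \<not> cut_norm n (H X) \<le> 15 * s / real n}"
    have "measure_pmf.expectation P (\<lambda>X. cut_norm n (H X))
        \<le> measure_pmf.expectation P (\<lambda>X. 15 * s / real n + indicator B X)"
    proof (rule integral_mono)
      show "integrable (measure_pmf P) (\<lambda>X. cut_norm n (H X))"
        by (rule integrable_measure_pmf_finite[OF fin])
      show "integrable (measure_pmf P) (\<lambda>X. 15 * s / real n + indicator B X)"
        by (rule integrable_measure_pmf_finite[OF fin])
      fix X
        have "0 \<le> 15 * s / real n" using s0 by simp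
        thus "cut_norm n (H X) \<le> 15 * s / real n + indicator B X"
        using cut1[of X] by (cases "X \<in> B") (auto simp: B_def indicator_def)
    qed
    also have "\<dots> = 15 * s / real n + measure_pmf.prob P B"
      by (subst Bochner_Integration.integral_add) (auto intro: integrable_measure_pmf_finite[OF fin])
    also have "\<dots> \<le> 15 * s / real n + exp (- real n)"
      using tail True by (simp add: B_def)
    also have "exp (- real n) \<le> s / real n"
    proof -
      have nle: "real n \<le> exp (real n)" using exp_ge_add_one_self[of "real n"] by linarith
      have "exp (- real n) = 1 / exp (real n)" by (simp add: exp_minus inverse_eq_divide)
      also have "\<dots> \<le> 1 / real n"
        by (rule divide_left_mono[OF nle]) (use n2 in auto)
      also have "\<dots> \<le> s / real n" using True n2 by (simp add: divide_right_mono)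
      finally show ?thesis .
    qed
    finally show ?thesis by simp
  next
    case False
    have ent: "measure_pmf.expectation P (\<lambda>X. \<bar>H X i j\<bar>) \<le> 2 * Q i j" if ij: "i < n" "j < n" for i j
    proof -
      have bq: "(1 - q) * q + q * (1 - q) \<le> 2 * q" if "0 \<le> q" "q \<le> 1" for q :: real
        using that by (simp add: algebra_simps mult_nonneg_nonneg)
      consider "i < j" | "j < i" | "i = j" by linarith
      thus ?thesis
      proof cases
        case 1
        have e: "(i, j) \<in> E" using 1 ij by (simp add: E_def Ep_def)
        have "measure_pmf.expectation P (\<lambda>X. \<bar>H X i j\<bar>)
            = measure_pmf.expectation P (\<lambda>X. (\<lambda>x. \<bar>(if x then 1 else 0) - Q i j\<bar>) (X (i, j)))"
          using 1 by (simp add: H_def Aof_def)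
        also have "\<dots> = measure_pmf.expectation (bernoulli_pmf (Q i j)) (\<lambda>x. \<bar>(if x then 1 else 0) - Q i j\<bar>)"
          unfolding P_def using marg[where d=False and p="\<lambda>e. bernoulli_pmf (case_prod Q e)"
              and f="\<lambda>x. \<bar>(if x then 1 else 0) - Q i j\<bar>", OF _ e] by (simp add: E_def finite_Ep)
        also have "\<dots> = (1 - Q i j) * Q i j + Q i j * (1 - Q i j)" using Qb[OF ij] by simp
        also have "\<dots> \<le> 2 * Q i j" using Qb[OF ij] bq by blast
        finally show ?thesis .
      next
        case 2
        have e: "(j, i) \<in> E" using 2 ij by (simp add: E_def Ep_def)
        have Qs: "Q i j = Q j i" using sym ij by blast
        have "measure_pmf.expectation P (\<lambda>X. \<bar>H X i j\<bar>)
            = measure_pmf.expectation P (\<lambda>X. (\<lambda>x. \<bar>(if x then 1 else 0) - Q j i\<bar>) (X (j, i)))"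
          using 2 by (simp add: H_def Aof_def Qs)
        also have "\<dots> = measure_pmf.expectation (bernoulli_pmf (Q j i)) (\<lambda>x. \<bar>(if x then 1 else 0) - Q j i\<bar>)"
          unfolding P_def using marg[where d=False and p="\<lambda>e. bernoulli_pmf (case_prod Q e)"
              and f="\<lambda>x. \<bar>(if x then 1 else 0) - Q j i\<bar>", OF _ e] by (simp add: E_def finite_Ep)
        also have "\<dots> = (1 - Q j i) * Q j i + Q j i * (1 - Q j i)" using Qb[of j i] ij by simp
        also have "\<dots> \<le> 2 * Q j i" using Qb[of j i] ij bq by blast
        finally show ?thesis using Qs by simp
      next
        case 3
        thus ?thesis using diag ij by (simp add: H_def Aof_def)
      qed
    qed
    have "measure_pmf.expectation P (\<lambda>X. cut_norm n (H X))
        \<le> measure_pmf.expectation P (\<lambda>X. (\<Sum>i<n. \<Sum>j<n. \<bar>H X i j\<bar>) / (real n)^2)"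
      by (rule integral_mono) (auto intro: integrable_measure_pmf_finite[OF fin] cut_le_L1)
    also have "\<dots> = (\<Sum>i<n. \<Sum>j<n. measure_pmf.expectation P (\<lambda>X. \<bar>H X i j\<bar>)) / (real n)^2"
      by (simp add: Bochner_Integration.integral_sum integrable_measure_pmf_finite[OF fin])
    also have "\<dots> \<le> (\<Sum>i<n. \<Sum>j<n. 2 * Q i j) / (real n)^2"
      by (intro divide_right_mono sum_mono ent) auto
    also have "\<dots> = 2 * s^2 / real n"
      using n2 by (simp add: sum_distrib_left[symmetric] D_def[symmetric] Dn power2_eq_square)
    also have "\<dots> \<le> 16 * (s / real n)"
    proof -
      have "s * s \<le> 8 * s" using False s0 by (intro mult_right_mono) auto
      thus ?thesis using n2 by (simp add: power2_eq_square field_simps)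
    qed
    finally show ?thesis .
  qed

  show ?thesis
  proof (intro conjI impI)
    show "measure_pmf.expectation (bern n Q) (\<lambda>A. cut_norm n (\<lambda>i j. A i j - Q i j))
           \<le> 16 * sqrt (density n Q / real n)"
      using part1 exp_eq sq by (simp add: \<rho>_def)
  next
    assume "1 \<le> real n * density n Q"
    hence s1: "s \<ge> 1" by (simp add: s_def \<rho>_def)
    have "measure_pmf.prob (bern n Q) {A. cut_norm n (\<lambda>i j. A i j - Q i j) \<le> 15 * sqrt (density n Q / real n)}
        = measure_pmf.prob P (UNIV - {X. \<not> cut_norm n (H X) \<le> 15 * s / real n})"
      using sq by (simp add: bern H_def \<rho>_def vimage_def Collect_neg_eq[symmetric] Compl_eq_Diff_UNIV[symmetric])
    also have "\<dots> = 1 - measure_pmf.prob P {X. \<not> cut_norm n (H X) \<le> 15 * s / real n}"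
      using measure_pmf.prob_compl[of "{X. \<not> cut_norm n (H X) \<le> 15 * s / real n}" P] by simp
    also have "\<dots> \<ge> 1 - exp (- real n)" using tail[OF s1] by simp
    finally show "measure_pmf.prob (bern n Q) {A. cut_norm n (\<lambda>i j. A i j - Q i j) \<le> 15 * sqrt (density n Q / real n)}
         \<ge> 1 - exp (- real n)" .
  qed
qed

end
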